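(* Let $d\ge1$ and let $G$ be a $d$-regular triangle-free graph on $n$ vertices. Then for every $\lambda>0$, \[ \frac1n\log P_G(\lambda)\;\le\;\frac{1}{2d}\log P_{K_{d,d}}(\lambda)=\frac{1}{2d}\log\big(2(1+\lambda)^d-1\big). \] In particular ($\lambda=1$), $G$ has at most $\big(2^{d+1}-1\big)^{n/(2d)}$ independent sets.
   Context: For a graph $H$ and $\lambda>0$, $P_H(\lambda)=\sum_J\lambda^{|J|}$ summed over all independent sets $J$ of $H$ (including the empty set). $K_{d,d}$ is the complete bipartite graph with parts of size $d$. Logarithms are natural. *)

theory Defs
  imports Complex_Main
begin

definition simple_graph :: "'a set \<Rightarrow> ('a \<Rightarrow> 'a \<Rightarrow> bool) \<Rightarrow> bool" where
  "simple_graph V E \<longleftrightarrow> finite V \<and> (\<forall>u v. E u v \<longrightarrow> u \<in> V \<and> v \<in> V)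
     \<and> (\<forall>u v. E u v \<longrightarrow> E v u) \<and> (\<forall>v. \<not> E v v)"

definition regular_graph :: "'a set \<Rightarrow> ('a \<Rightarrow> 'a \<Rightarrow> bool) \<Rightarrow> nat \<Rightarrow> bool" where
  "regular_graph V E d \<longleftrightarrow> (\<forall>v\<in>V. card {u\<in>V. E v u} = d)"

definition triangle_free :: "'a set \<Rightarrow> ('a \<Rightarrow> 'a \<Rightarrow> bool) \<Rightarrow> bool" where
  "triangle_free V E \<longleftrightarrow> \<not> (\<exists>u\<in>V. \<exists>v\<in>V. \<exists>w\<in>V. E u v \<and> E v w \<and> E u w)"

definition indep_set :: "'a set \<Rightarrow> ('a \<Rightarrow> 'a \<Rightarrow> bool) \<Rightarrow> 'a set \<Rightarrow> bool" where
  "indep_set V E J \<longleftrightarrow> J \<subseteq> V \<and> (\<forall>u\<in>J. \<forall>v\<in>J. \<not> E u v)"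

definition indep_poly :: "'a set \<Rightarrow> ('a \<Rightarrow> 'a \<Rightarrow> bool) \<Rightarrow> real \<Rightarrow> real" where
  "indep_poly V E lam = (\<Sum>J\<in>{J. indep_set V E J}. lam ^ card J)"

definition Kdd_V :: "nat \<Rightarrow> nat set" where
  "Kdd_V d = {0..<2*d}"

definition Kdd_E :: "nat \<Rightarrow> nat \<Rightarrow> nat \<Rightarrow> bool" where
  "Kdd_E d i j \<longleftrightarrow> (i < d \<and> d \<le> j \<and> j < 2*d) \<or> (j < d \<and> d \<le> i \<and> i < 2*d)"

end

theory Submission
  imports Defs
begin


lemma pow_sum1:
  assumes "finite U"
  shows "(\<Sum>S\<in>Pow U. (t::real) ^ card S) = (1 + t) ^ card U"
proof -
  have "(\<Prod>x\<in>U. t + 1) = (\<Sum>X\<in>Pow U. (\<Prod>x\<in>X. t) * (\<Prod>x\<in>U-X. 1))"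
    by (rule prod_add[OF assms])
  then show ?thesis by (simp add: add.commute)
qed

lemma pow_sum2:
  assumes "finite U"
  shows "(\<Sum>S\<in>Pow U. real (card S) * (t::real) ^ card S) = real (card U) * t * (1 + t) ^ (card U - 1)"
  using assms
proof (induction U rule: finite_induct)
  case empty
  then show ?case by simp
next
  case (insert x U)
  have fin: "finite (Pow U)" using insert by simp
  have disj: "Pow U \<inter> insert x ` Pow U = {}" using insert by auto
  have inj: "inj_on (insert x) (Pow U)" using insert unfolding inj_on_def by (metis Pow_iff insert_absorb insert_ident subset_iff)
  have cardS: "\<And>S. S \<in> Pow U \<Longrightarrow> card (insert x S) = Suc (card S)"
    using insert by (meson Pow_iff card_insert_disjoint finite_subset subset_iff)
  have "(\<Sum>S\<in>Pow (insert x U). real (card S) * t ^ card S)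
      = (\<Sum>S\<in>Pow U. real (card S) * t ^ card S) + (\<Sum>S\<in>insert x ` Pow U. real (card S) * t ^ card S)"
    unfolding Pow_insert by (rule sum.union_disjoint) (use fin disj in auto)
  also have "(\<Sum>S\<in>insert x ` Pow U. real (card S) * t ^ card S) = (\<Sum>S\<in>Pow U. real (card (insert x S)) * t ^ card (insert x S))"
    by (rule sum.reindex_cong[OF inj]) auto
  also have "\<dots> = (\<Sum>S\<in>Pow U. t * (real (card S) * t ^ card S) + t * t ^ card S)"
    by (rule sum.cong) (auto simp: cardS algebra_simps)
  also have "\<dots> = t * (\<Sum>S\<in>Pow U. real (card S) * t ^ card S) + t * (1+t) ^ card U"
    by (simp add: sum.distrib sum_distrib_left[symmetric] pow_sum1 insert)
  finally have eq: "(\<Sum>S\<in>Pow (insert x U). real (card S) * t ^ card S)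
      = (1 + t) * (real (card U) * t * (1 + t) ^ (card U - 1)) + t * (1+t) ^ card U"
    using insert by (simp add: algebra_simps)
  show ?case
  proof (cases "card U")
    case 0
    then show ?thesis using eq insert by simp
  next
    case (Suc m)
    then show ?thesis using eq insert by (simp add: algebra_simps)
  qed
qed

lemma key_ineq:
  fixes x :: real
  assumes "x \<ge> 1" "y \<le> k"
  shows "real y * (x ^ k - 1) * x ^ y \<le> real k * x ^ k * (x ^ y - 1)"
  using assms(2)
proof (induction k rule: dec_induct)
  case base
  then show ?case by simp
next
  case (step k)
  have b: "1 + real y * (x - 1) \<le> x ^ y"
    using Bernoulli_inequality[of "x - 1" y] assms(1) by simp
  have m: "x ^ y \<le> x ^ Suc k" using step assms(1) by (intro power_increasing) auto
  have x0: "x ^ y \<ge> 1" using assms(1) by simp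
  have h1: "x ^ y * (real y * (x - 1)) \<le> x ^ Suc k * (x ^ y - 1)"
    using b m x0 assms(1)
    by (intro mult_mono) auto
  have h2: "x * (real y * (x ^ k - 1) * x ^ y) \<le> x * (real k * x ^ k * (x ^ y - 1))"
    using step assms by (intro mult_left_mono) auto
  show ?case using h1 h2 by (simp add: algebra_simps)
qed



lemma J_ineq:
  fixes t :: real
  assumes "t > 0" "y \<le> d" "d \<ge> 1"
  shows "(1+t)^d + ((1+t)^d - 1) / real d * real y * (1+t)^(y-1) \<le> (1+t)^(d-1) * (t + (1+t)^y)"
proof (cases y)
  case 0
  then show ?thesis using assms by (cases d) (auto simp: algebra_simps)
next
  case (Suc m)
  obtain e where d: "d = Suc e" using assms by (cases d) auto
  have k: "real y * ((1+t) ^ d - 1) * (1+t) ^ y \<le> real d * (1+t) ^ d * ((1+t) ^ y - 1)"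
    using key_ineq[of "1+t" y d] assms by simp
  have dpos: "real d > 0" using assms by simp
  have "((1+t)^d - 1) / real d * real y * (1+t)^(y-1) = (real y * ((1+t) ^ d - 1) * (1+t) ^ y) / (real d * (1+t))"
  proof -
    have "(1+t)^y = (1+t) * (1+t)^(y-1)" using Suc by simp
    moreover have "(1+t) > 0" using assms by simp
    moreover have "\<And>Q D a yy B::real. Q > 0 \<Longrightarrow> D > 0 \<Longrightarrow> a / D * yy * B = yy * a * (Q*B) / (D*Q)"
      by (simp add: field_simps)
    ultimately show ?thesis using dpos by metis

  qed
  also have "\<dots> \<le> (real d * (1+t) ^ d * ((1+t) ^ y - 1)) / (real d * (1+t))"
    using k dpos assms by (intro divide_right_mono) auto
  also have "\<dots> = (1+t)^e * ((1+t)^y - 1)"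
  proof -
    have "(1+t)^d = (1+t) * (1+t)^e" using d by simp
    moreover have "(1+t) > 0" using assms by simp
    moreover have "\<And>Q D a B::real. Q > 0 \<Longrightarrow> D > 0 \<Longrightarrow> D * (Q * a) * B / (D * Q) = a * B"
      by (simp add: field_simps)
    ultimately show ?thesis using dpos by metis
  qed
  finally show ?thesis using d by (simp add: algebra_simps)
qed



lemma finite_indep:
  assumes "simple_graph V E"
  shows "finite {J. indep_set V E J}"
proof -
  have "{J. indep_set V E J} \<subseteq> Pow V" unfolding indep_set_def by auto
  moreover have "finite V" using assms unfolding simple_graph_def by simp
  ultimately show ?thesis by (meson finite_Pow_iff finite_subset)
qed

lemma vertex_bound:
  fixes t :: real
  assumes sg: "simple_graph V E" and tf: "triangle_free V E" and vV: "v \<in> V"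
    and dN: "card {u\<in>V. E v u} = d" and t: "t > 0" and d1: "d \<ge> 1"
  shows "(\<Sum>I\<in>{J. indep_set V E J}. t ^ card I * ((1+t)^d * (if v \<in> I then 1 else 0)
            + ((1+t)^d - 1) / real d * real (card (I \<inter> {u\<in>V. E v u}))))
         \<le> t * (1+t)^(d-1) * (\<Sum>I\<in>{J. indep_set V E J}. t ^ card I)"
proof -
  define N where "N = {u\<in>V. E v u}"
  define Nv where "Nv = insert v N"
  define IS where "IS = {J. indep_set V E J}"
  define T where "T = {J. indep_set V E J \<and> J \<inter> Nv = {}}"
  define U where "U J = {u\<in>N. \<forall>x\<in>J. \<not> E u x}" for J
  define c where "c = ((1+t)^d - 1) / real d"
  define \<phi> where "\<phi> I = t ^ card I * ((1+t)^d * (if v \<in> I then 1 else 0) + c * real (card (I \<inter> N)))" for I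
  define \<psi> where "\<psi> I = t ^ card I" for I :: "'a set"
  have finV: "finite V" using sg unfolding simple_graph_def by simp
  have sym: "\<And>a b. E a b \<Longrightarrow> E b a" and irr: "\<And>a. \<not> E a a" and inV: "\<And>a b. E a b \<Longrightarrow> a \<in> V \<and> b \<in> V"
    using sg unfolding simple_graph_def by blast+
  have notri: "\<And>a b c. E a b \<Longrightarrow> E b c \<Longrightarrow> E a c \<Longrightarrow> False"
    using tf inV unfolding triangle_free_def by blast
  have finIS: "finite IS" unfolding IS_def using finite_indep[OF sg] .
  have finT: "finite T"
    by (rule finite_subset[OF _ finIS]) (auto simp: T_def IS_def)
  have img: "(\<lambda>I. I - Nv) ` IS \<subseteq> T"
    unfolding IS_def T_def indep_set_def by auto
  have cardN: "card N = d" using dN N_def by simp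
  have finN: "finite N" using finV N_def by simp
  have vN: "v \<notin> N" using irr N_def by simp
  have fibre: "{I\<in>IS. I - Nv = J} = insert (insert v J) ((\<lambda>S. J \<union> S) ` Pow (U J))"
    if JT: "J \<in> T" for J
  proof
    have Jind: "indep_set V E J" and JNv: "J \<inter> Nv = {}" using JT T_def by auto
    show "{I\<in>IS. I - Nv = J} \<subseteq> insert (insert v J) ((\<lambda>S. J \<union> S) ` Pow (U J))"
    proof
      fix I assume "I \<in> {I\<in>IS. I - Nv = J}"
      then have Iind: "indep_set V E I" and IJ: "I - Nv = J" using IS_def by auto
      show "I \<in> insert (insert v J) ((\<lambda>S. J \<union> S) ` Pow (U J))"
      proof (cases "v \<in> I")
        case True
        have "I \<inter> N = {}" using True Iind unfolding indep_set_def N_def by auto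
        then have "I = insert v J" using True IJ Nv_def by auto
        then show ?thesis by simp
      next
        case False
        have "I \<inter> N \<subseteq> U J" using Iind IJ unfolding U_def indep_set_def by auto
        moreover have "I = J \<union> (I \<inter> N)" using False IJ Nv_def by auto
        ultimately show ?thesis by blast
      qed
    qed
    show "insert (insert v J) ((\<lambda>S. J \<union> S) ` Pow (U J)) \<subseteq> {I\<in>IS. I - Nv = J}"
    proof
      fix I assume "I \<in> insert (insert v J) ((\<lambda>S. J \<union> S) ` Pow (U J))"
      then consider "I = insert v J" | S where "S \<subseteq> U J" "I = J \<union> S" by auto
      then show "I \<in> {I\<in>IS. I - Nv = J}"
      proof cases
        case 1
        have "indep_set V E I"
          using Jind JNv vV sym irr unfolding 1 indep_set_def Nv_def N_def by auto
        moreover have "I - Nv = J" using 1 JNv Nv_def by auto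
        ultimately show ?thesis using IS_def by auto
      next
        case (2 S)
        have SN: "S \<subseteq> N" using 2 U_def by auto
        have "indep_set V E I"
          unfolding indep_set_def
        proof
          show "I \<subseteq> V" using 2 SN Jind N_def unfolding indep_set_def by auto
          show "\<forall>u\<in>I. \<forall>w\<in>I. \<not> E u w"
          proof (intro ballI)
            fix u w assume u: "u \<in> I" and w: "w \<in> I"
            show "\<not> E u w"
            proof
              assume Euw: "E u w"
              consider "u \<in> J" "w \<in> J" | "u \<in> J" "w \<in> S" | "u \<in> S" "w \<in> J" | "u \<in> S" "w \<in> S"
                using u w 2 by auto
              then show False
              proof cases
                case 1 then show ?thesis using Jind Euw unfolding indep_set_def by auto
              next
                case 2 then show ?thesis using Euw sym \<open>S \<subseteq> U J\<close> U_def by auto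
              next
                case 3 then show ?thesis using Euw \<open>S \<subseteq> U J\<close> U_def by auto
              next
                case 4
                then have "E v u" "E v w" using SN N_def by auto
                then show ?thesis using notri[of v u w] Euw by auto
              qed
            qed
          qed
        qed
        moreover have "I - Nv = J" using 2 SN JNv Nv_def by auto
        ultimately show ?thesis using IS_def by auto
      qed
    qed
  qed
  have fibre_bound: "sum \<phi> {I\<in>IS. I - Nv = J} \<le> t * (1+t)^(d-1) * sum \<psi> {I\<in>IS. I - Nv = J}"
    if JT: "J \<in> T" for J
  proof -
    have Jind: "indep_set V E J" and JNv: "J \<inter> Nv = {}" using JT T_def by auto
    have finJ: "finite J" using Jind finV unfolding indep_set_def using finite_subset by auto
    have UN: "U J \<subseteq> N" using U_def by auto
    have finU: "finite (U J)" using UN finN finite_subset by auto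
    have y: "card (U J) \<le> d" using card_mono[OF finN UN] cardN by simp
    have vJ: "v \<notin> J" using JNv Nv_def by auto
    have notin: "insert v J \<notin> (\<lambda>S. J \<union> S) ` Pow (U J)" using vJ vN UN by auto
    have inj: "inj_on (\<lambda>S. J \<union> S) (Pow (U J))"
    proof (rule inj_onI)
      fix S S' assume "S \<in> Pow (U J)" "S' \<in> Pow (U J)" "J \<union> S = J \<union> S'"
      moreover have "J \<inter> U J = {}" using JNv UN Nv_def by auto
      ultimately show "S = S'" by blast
    qed
    have cJS: "card (J \<union> S) = card J + card S" if "S \<in> Pow (U J)" for S
    proof -
      have "J \<inter> S = {}" using that JNv UN Nv_def by auto
      moreover have "finite S" using that finU finite_subset by auto
      ultimately show ?thesis using finJ card_Un_disjoint by blast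
    qed
    have NJS: "(J \<union> S) \<inter> N = S" if "S \<in> Pow (U J)" for S
      using that JNv UN Nv_def by auto
    have vJS: "v \<notin> J \<union> S" if "S \<in> Pow (U J)" for S using that vJ vN UN by auto
    have cvJ: "card (insert v J) = card J + 1" using vJ finJ by simp
    have NvJ: "insert v J \<inter> N = {}" using JNv vN Nv_def by auto
    define y where "y = card (U J)"
    define q where "q = 1 + t"
    have s\<phi>: "sum \<phi> {I\<in>IS. I - Nv = J} = t ^ (card J + 1) * q^d + t ^ card J * c * (real y * t * q^(y-1))"
    proof -
      have "sum \<phi> {I\<in>IS. I - Nv = J} = \<phi> (insert v J) + (\<Sum>S\<in>Pow (U J). \<phi> (J \<union> S))"
        using fibre[OF JT] notin inj finU by (simp add: sum.reindex)
      also have "(\<Sum>S\<in>Pow (U J). \<phi> (J \<union> S)) = (\<Sum>S\<in>Pow (U J). t ^ card J * c * (real (card S) * t ^ card S))"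
      proof (rule sum.cong[OF refl])
        fix S assume S: "S \<in> Pow (U J)"
        have "(if v \<in> J \<union> S then 1 else 0) = (0::real)" using vJS[OF S] by simp
        then show "\<phi> (J \<union> S) = t ^ card J * c * (real (card S) * t ^ card S)"
          unfolding \<phi>_def cJS[OF S] NJS[OF S] by (simp add: power_add)
      qed
      also have "\<dots> = t ^ card J * c * (real y * t * q^(y-1))"
        using pow_sum2[OF finU, of t] by (simp add: sum_distrib_left[symmetric] y_def q_def)
      finally show ?thesis using cvJ NvJ by (simp add: \<phi>_def q_def)
    qed
    have s\<psi>: "sum \<psi> {I\<in>IS. I - Nv = J} = t ^ (card J + 1) + t ^ card J * q^y"
    proof -
      have "sum \<psi> {I\<in>IS. I - Nv = J} = \<psi> (insert v J) + (\<Sum>S\<in>Pow (U J). \<psi> (J \<union> S))"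
        using fibre[OF JT] notin inj finU by (simp add: sum.reindex)
      also have "(\<Sum>S\<in>Pow (U J). \<psi> (J \<union> S)) = (\<Sum>S\<in>Pow (U J). t ^ card J * t ^ card S)"
        by (rule sum.cong) (auto simp: \<psi>_def cJS power_add)
      also have "\<dots> = t ^ card J * q^y"
        using pow_sum1[OF finU, of t] by (simp add: sum_distrib_left[symmetric] y_def q_def)
      finally show ?thesis using cvJ by (simp add: \<psi>_def q_def)
    qed
    have ji: "q^d + c * real y * q^(y-1) \<le> q^(d-1) * (t + q^y)"
      using J_ineq[OF t, of y d] y d1 unfolding q_def c_def y_def by simp
    have tJ: "t ^ (card J + 1) \<ge> 0" using t by simp
    have "t ^ (card J + 1) * (q^d + c * real y * q^(y-1)) \<le> t ^ (card J + 1) * (q^(d-1) * (t + q^y))"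
      using ji tJ by (rule mult_left_mono)
    then show ?thesis unfolding s\<phi> s\<psi> by (simp add: algebra_simps q_def)
  qed
  have "sum \<phi> IS = (\<Sum>J\<in>T. sum \<phi> {I\<in>IS. I - Nv = J})"
    using sum.group[OF finIS finT img, of \<phi>] by simp
  also have "\<dots> \<le> (\<Sum>J\<in>T. t * (1+t)^(d-1) * sum \<psi> {I\<in>IS. I - Nv = J})"
    by (rule sum_mono) (rule fibre_bound)
  also have "\<dots> = t * (1+t)^(d-1) * sum \<psi> IS"
    using sum.group[OF finIS finT img, of \<psi>] by (simp add: sum_distrib_left[symmetric])
  finally show ?thesis unfolding \<phi>_def \<psi>_def IS_def N_def c_def .
qed



lemma P_deriv:
  fixes IS :: "'a set set"
  shows "((\<lambda>t. \<Sum>I\<in>IS. t ^ card I) has_real_derivative (\<Sum>I\<in>IS. real (card I) * t ^ (card I - 1))) (at t)"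
  by (auto intro!: derivative_eq_intros)

lemma f_deriv:
  fixes IS :: "'a set set" and t :: real
  assumes "(\<Sum>I\<in>IS. t ^ card I) > 0" "2*(1+t)^d - 1 > 0" "t > -1" "d > 0" "n > 0"
  shows "((\<lambda>t. ln (2*(1+t)^d - 1) / (2*real d) - ln (\<Sum>I\<in>IS. t ^ card I) / real n) has_real_derivative
     ((2 * real d * (1+t)^(d-1)) / (2*(1+t)^d - 1) / (2*real d) - (\<Sum>I\<in>IS. real (card I) * t ^ (card I - 1)) / (\<Sum>I\<in>IS. t ^ card I) / real n)) (at t)"
  using assms apply (intro derivative_eq_intros refl | simp)+
  done



lemma total_bound:
  fixes t :: real
  assumes sg: "simple_graph V E" and tf: "triangle_free V E" and reg: "regular_graph V E d"
    and t: "t > 0" and d1: "d \<ge> 1"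
  shows "(2*(1+t)^d - 1) * (\<Sum>I\<in>{J. indep_set V E J}. real (card I) * t ^ card I)
         \<le> t * (1+t)^(d-1) * real (card V) * (\<Sum>I\<in>{J. indep_set V E J}. t ^ card I)"
proof -
  define IS where "IS = {J. indep_set V E J}"
  define c where "c = ((1+t)^d - 1) / real d"
  have finV: "finite V" using sg unfolding simple_graph_def by simp
  have sym: "\<And>a b. E a b \<Longrightarrow> E b a"
    using sg unfolding simple_graph_def by blast
  have finIS: "finite IS" unfolding IS_def using finite_indep[OF sg] .
  have cd: "c * real d = (1+t)^d - 1" using d1 by (simp add: c_def)
  have ind: "(\<Sum>v\<in>V. (if v \<in> I then 1 else 0)) = real (card I)" if "I \<in> IS" for I
  proof -
    have "I \<subseteq> V" using that unfolding IS_def indep_set_def by auto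
    then have "V \<inter> I = I" by auto
    then show ?thesis using sum.inter_restrict[OF finV, of "\<lambda>_. (1::real)" I] by simp
  qed
  have nb: "(\<Sum>v\<in>V. real (card (I \<inter> {u\<in>V. E v u}))) = real d * real (card I)" if "I \<in> IS" for I
  proof -
    have IV: "I \<subseteq> V" using that unfolding IS_def indep_set_def by auto
    have finI: "finite I" using IV finV finite_subset by auto
    have "(\<Sum>v\<in>V. real (card (I \<inter> {u\<in>V. E v u}))) = (\<Sum>v\<in>V. \<Sum>u\<in>I. if E v u then 1 else 0)"
    proof (rule sum.cong[OF refl])
      fix v assume "v \<in> V"
      have "I \<inter> {u\<in>V. E v u} = {u\<in>I. E v u}" using IV by auto
      then show "real (card (I \<inter> {u\<in>V. E v u})) = (\<Sum>u\<in>I. if E v u then 1 else 0)"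
        using finI by (simp add: sum.If_cases Int_def)
    qed
    also have "\<dots> = (\<Sum>u\<in>I. \<Sum>v\<in>V. if E v u then 1 else 0)" by (rule sum.swap)
    also have "\<dots> = (\<Sum>u\<in>I. real d)"
    proof (rule sum.cong[OF refl])
      fix u assume "u \<in> I"
      then have uV: "u \<in> V" using IV by auto
      have "{v\<in>V. E v u} = {v\<in>V. E u v}" using sym by auto
      then have "card {v\<in>V. E v u} = d" using reg uV unfolding regular_graph_def by simp
      then show "(\<Sum>v\<in>V. if E v u then 1 else (0::real)) = real d"
        using finV by (simp add: sum.If_cases Int_def)
    qed
    finally show ?thesis by simp
  qed
  have "(\<Sum>v\<in>V. \<Sum>I\<in>IS. t ^ card I * ((1+t)^d * (if v \<in> I then 1 else 0)
            + c * real (card (I \<inter> {u\<in>V. E v u}))))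
        \<le> (\<Sum>v\<in>V. t * (1+t)^(d-1) * (\<Sum>I\<in>IS. t ^ card I))"
  proof (rule sum_mono)
    fix v assume vV: "v \<in> V"
    have "card {u\<in>V. E v u} = d" using reg vV unfolding regular_graph_def by simp
    then show "(\<Sum>I\<in>IS. t ^ card I * ((1+t)^d * (if v \<in> I then 1 else 0)
            + c * real (card (I \<inter> {u\<in>V. E v u})))) \<le> t * (1+t)^(d-1) * (\<Sum>I\<in>IS. t ^ card I)"
      using vertex_bound[OF sg tf vV _ t d1] unfolding IS_def c_def by simp
  qed
  also have "\<dots> = t * (1+t)^(d-1) * real (card V) * (\<Sum>I\<in>IS. t ^ card I)" by simp
  also have "(\<Sum>v\<in>V. \<Sum>I\<in>IS. t ^ card I * ((1+t)^d * (if v \<in> I then 1 else 0)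
            + c * real (card (I \<inter> {u\<in>V. E v u}))))
      = (\<Sum>I\<in>IS. t ^ card I * ((1+t)^d * (\<Sum>v\<in>V. (if v \<in> I then 1 else 0))
            + c * (\<Sum>v\<in>V. real (card (I \<inter> {u\<in>V. E v u})))))"
    by (subst sum.swap) (rule sum.cong[OF refl], simp only: sum_distrib_left[symmetric] sum.distrib)
  also have "\<dots> = (\<Sum>I\<in>IS. (2*(1+t)^d - 1) * (real (card I) * t ^ card I))"
  proof (rule sum.cong[OF refl])
    fix I assume I: "I \<in> IS"
    show "t ^ card I * ((1+t)^d * (\<Sum>v\<in>V. (if v \<in> I then 1 else 0))
            + c * (\<Sum>v\<in>V. real (card (I \<inter> {u\<in>V. E v u}))))
          = (2*(1+t)^d - 1) * (real (card I) * t ^ card I)"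
    proof -
      have h: "c * (real d * real (card I)) = ((1+t)^d - 1) * real (card I)"
        using cd by (simp add: mult.assoc[symmetric])
      show ?thesis unfolding ind[OF I] nb[OF I] h by (simp add: algebra_simps)
    qed
  qed
  finally show ?thesis unfolding IS_def by (simp add: sum_distrib_left)
qed



lemma Kdd_indep: "indep_set (Kdd_V d) (Kdd_E d) J \<longleftrightarrow> J \<in> Pow {0..<d} \<union> Pow {d..<2*d}"
proof
  assume h: "indep_set (Kdd_V d) (Kdd_E d) J"
  then have sub: "J \<subseteq> {0..<2*d}" and ne: "\<forall>u\<in>J. \<forall>v\<in>J. \<not> Kdd_E d u v"
    unfolding indep_set_def Kdd_V_def by auto
  show "J \<in> Pow {0..<d} \<union> Pow {d..<2*d}"
  proof (rule ccontr)
    assume "J \<notin> Pow {0..<d} \<union> Pow {d..<2*d}"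
    then have "\<not> J \<subseteq> {0..<d}" "\<not> J \<subseteq> {d..<2*d}" by auto
    then obtain a b where "a \<in> J" "b \<in> J" "\<not> a < d" "\<not> (d \<le> b \<and> b < 2*d)"
      by (metis atLeastLessThan_iff subsetI zero_le)
    moreover from this have "b < d" "a < 2*d" using sub by auto
    ultimately show False using ne unfolding Kdd_E_def by force
  qed
next
  assume "J \<in> Pow {0..<d} \<union> Pow {d..<2*d}"
  then show "indep_set (Kdd_V d) (Kdd_E d) J"
    unfolding indep_set_def Kdd_V_def Kdd_E_def by auto
qed

lemma Kdd_poly: "indep_poly (Kdd_V d) (Kdd_E d) t = 2 * (1 + t) ^ d - 1"
proof -
  have eq: "{J. indep_set (Kdd_V d) (Kdd_E d) J} = Pow {0..<d} \<union> Pow {d..<2*d}"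
    using Kdd_indep by auto
  have e: "{0..<d} \<inter> {d..<2*d} = ({}::nat set)" by auto
  have int: "Pow {0..<d} \<inter> Pow {d..<2*d} = {{}}" by (simp add: Pow_Int_eq[symmetric] e)
  have "(\<Sum>J\<in>Pow {0..<d} \<union> Pow {d..<2*d}. t ^ card J) + (\<Sum>J\<in>Pow {0..<d} \<inter> Pow {d..<2*d}. t ^ card J)
     = (\<Sum>J\<in>Pow {0..<d}. t ^ card J) + (\<Sum>J\<in>Pow {d..<2*d}. t ^ card J)"
    by (rule sum.union_inter) auto
  then show ?thesis unfolding indep_poly_def eq using int pow_sum1[of "{0..<d}" t] pow_sum1[of "{d..<2*d}" t]
    by simp
qed

lemma P_ge1:
  assumes "simple_graph V E" "(t::real) \<ge> 0"
  shows "(\<Sum>I\<in>{J. indep_set V E J}. t ^ card I) \<ge> 1"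
proof -
  have "{} \<in> {J. indep_set V E J}" unfolding indep_set_def by auto
  then have "t ^ card ({}::'a set) \<le> (\<Sum>I\<in>{J. indep_set V E J}. t ^ card I)"
    using assms finite_indep[OF assms(1)] by (intro member_le_sum) auto
  then show ?thesis by simp
qed

lemma P_0:
  assumes "simple_graph V E"
  shows "(\<Sum>I\<in>{J. indep_set V E J}. (0::real) ^ card I) = 1"
proof -
  have finV: "finite V" using assms unfolding simple_graph_def by simp
  have "(\<Sum>I\<in>{J. indep_set V E J}. (0::real) ^ card I) = (\<Sum>I\<in>{J. indep_set V E J}. if I = {} then 1 else 0)"
  proof (rule sum.cong[OF refl])
    fix I assume "I \<in> {J. indep_set V E J}"
    then have "finite I" using finV unfolding indep_set_def using finite_subset by auto
    then show "(0::real) ^ card I = (if I = {} then 1 else 0)" by auto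
  qed
  also have "\<dots> = 1" using finite_indep[OF assms] by (simp add: indep_set_def)
  finally show ?thesis .
qed

lemma main_ineq:
  fixes lam :: real
  assumes sg: "simple_graph V E" and tf: "triangle_free V E" and reg: "regular_graph V E d"
    and lam: "lam > 0" and d1: "d \<ge> 1" and n: "card V = n" and n0: "n > 0"
  shows "ln (indep_poly V E lam) / real n \<le> ln (2 * (1 + lam) ^ d - 1) / (2 * real d)"
proof -
  define IS where "IS = {J. indep_set V E J}"
  define P where "P x = (\<Sum>I\<in>IS. x ^ card I)" for x :: real
  define P' where "P' x = (\<Sum>I\<in>IS. real (card I) * x ^ (card I - 1))" for x :: real
  define f where "f x = ln (2*(1+x)^d - 1) / (2*real d) - ln (P x) / real n" for x
  define f' where "f' x = (2 * real d * (1+x)^(d-1)) / (2*(1+x)^d - 1) / (2*real d) - P' x / P x / real n" for x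
  have Pge: "P x \<ge> 1" if "x \<ge> 0" for x using P_ge1[OF sg that] unfolding P_def IS_def .
  have Kpos: "2*(1+x)^d - 1 \<ge> (1::real)" if "x \<ge> 0" for x
  proof -
    have "(1+x)^d \<ge> 1" using that by simp
    then show ?thesis by simp
  qed
  have D: "(f has_real_derivative f' x) (at x)" if "x \<ge> 0" for x
    unfolding f_def f'_def P_def P'_def
    using f_deriv[where IS=IS and t=x and d=d and n=n] Pge[OF that] Kpos[OF that] that d1 n0 unfolding P_def by simp
  have "f 0 \<le> f lam"
  proof (rule DERIV_nonneg_imp_increasing_open[where f=f and a=0 and b=lam])
    show "0 \<le> lam" using lam by simp
    show "continuous_on {0..lam} f"
      using D by (intro continuous_at_imp_continuous_on ballI DERIV_isCont) auto
    fix x :: real assume x: "0 < x" "x < lam"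
    have Px: "P x > 0" using Pge[of x] x by simp
    have Kx: "2*(1+x)^d - 1 > 0" using Kpos[of x] x by linarith
    have A: "(\<Sum>I\<in>IS. real (card I) * x ^ card I) = x * P' x"
    proof -
      have k: "\<And>k::nat. real k * x ^ k = x * (real k * x ^ (k - 1))"
        by (case_tac k) auto
      show ?thesis unfolding P'_def sum_distrib_left by (simp only: k)
    qed
    have tb: "(2*(1+x)^d - 1) * (x * P' x) \<le> x * (1+x)^(d-1) * real n * P x"
      using total_bound[OF sg tf reg x(1) d1] A unfolding IS_def P_def n by simp
    have "x * ((2*(1+x)^d - 1) * P' x) \<le> x * ((1+x)^(d-1) * real n * P x)"
      using tb by (simp add: mult.commute mult.left_commute)
    then have tb2: "(2*(1+x)^d - 1) * P' x \<le> (1+x)^(d-1) * real n * P x"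
      using x(1) by (rule mult_left_le_imp_le)
    have "P' x / P x / real n \<le> (1+x)^(d-1) / (2*(1+x)^d - 1)"
      using tb2 Px Kx n0 by (simp add: divide_simps algebra_simps)
    moreover have "(2 * real d * (1+x)^(d-1)) / (2*(1+x)^d - 1) / (2*real d) = (1+x)^(d-1) / (2*(1+x)^d - 1)"
      using d1 by simp
    ultimately have "f' x \<ge> 0" unfolding f'_def by simp
    then show "\<exists>y. (f has_real_derivative y) (at x) \<and> 0 \<le> y" using D[of x] x by auto
  qed
  moreover have "f 0 = 0" unfolding f_def P_def IS_def using P_0[OF sg] by simp
  ultimately have "0 \<le> f lam" by simp
  then show ?thesis unfolding f_def P_def IS_def indep_poly_def by simp
qed



theorem mainTheorem9:
  fixes V :: "'a set" and E :: "'a \<Rightarrow> 'a \<Rightarrow> bool" and d n :: nat and lam :: real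
  assumes "d \<ge> 1"
    and "simple_graph V E"
    and "regular_graph V E d"
    and "triangle_free V E"
    and "card V = n"
    and "lam > 0"
  shows "ln (indep_poly V E lam) / real n \<le> ln (indep_poly (Kdd_V d) (Kdd_E d) lam) / (2 * real d)
     \<and> indep_poly (Kdd_V d) (Kdd_E d) lam = 2 * (1 + lam) ^ d - 1
     \<and> real (card {J. indep_set V E J}) \<le> (2 ^ (d + 1) - 1) powr (real n / (2 * real d))"
proof -
  note d1 = assms(1) and sg = assms(2) and reg = assms(3) and tf = assms(4) and n = assms(5) and lam = assms(6)
  have finV: "finite V" using sg unfolding simple_graph_def by simp
  have Kge: "2 * (1 + t) ^ d - 1 \<ge> (1::real)" if "t \<ge> 0" for t :: real
  proof -
    have "(1+t)^d \<ge> 1" using that by simp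
    then show ?thesis by simp
  qed
  have V0: "V = {}" if "n = 0" using that n finV by simp
  have IS0: "{J. indep_set V E J} = {{}}" if "n = 0" using V0[OF that] unfolding indep_set_def by auto
  have c1: "ln (indep_poly V E lam) / real n \<le> ln (2 * (1 + lam) ^ d - 1) / (2 * real d)"
  proof (cases "n = 0")
    case True
    have "ln (2 * (1 + lam) ^ d - 1) \<ge> 0" using Kge[of lam] lam by simp
    then show ?thesis using True by simp
  next
    case False
    then show ?thesis using main_ineq[OF sg tf reg lam d1 n] by simp
  qed
  have c3: "real (card {J. indep_set V E J}) \<le> (2 ^ (d + 1) - 1) powr (real n / (2 * real d))"
  proof (cases "n = 0")
    case True
    have "(2::real) * 2^d \<noteq> 1" using one_le_power[of "2::real" d] by linarith
    then show ?thesis using IS0[OF True] True by simp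
  next
    case False
    have X: "(2::real) ^ (d + 1) - 1 = 2 * (1 + 1) ^ d - 1" by simp
    have Xge: "(2::real) ^ (d + 1) - 1 \<ge> 1" using Kge[of 1] X by simp
    have cardP: "indep_poly V E 1 = real (card {J. indep_set V E J})"
      unfolding indep_poly_def by simp
    have cpos: "real (card {J. indep_set V E J}) > 0"
    proof -
      have "{} \<in> {J. indep_set V E J}" unfolding indep_set_def by auto
      then show ?thesis using finite_indep[OF sg] card_gt_0_iff by fastforce
    qed
    have "ln (real (card {J. indep_set V E J})) / real n \<le> ln (2 ^ (d + 1) - 1) / (2 * real d)"
      using main_ineq[OF sg tf reg _ d1 n, of 1] False cardP X by simp
    then have "ln (real (card {J. indep_set V E J})) \<le> real n / (2 * real d) * ln (2 ^ (d + 1) - 1)"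
      using False by (simp add: field_simps)
    then have "exp (ln (real (card {J. indep_set V E J}))) \<le> exp (real n / (2 * real d) * ln (2 ^ (d + 1) - 1))"
      by simp
    moreover have "(2::real) * 2^d \<noteq> 1" using one_le_power[of "2::real" d] by linarith
    ultimately show ?thesis using cpos by (simp add: powr_def)
  qed
  show ?thesis using c1 c3 Kdd_poly by simp
qed

end
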